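(* Let $K\subset\mathbb{R}^n$ be a convex body and $1\leq i\leq n$. Then $\widetilde{\mathrm{r}}_i(K)\leq i\,\mathrm{r}_i(K)$. For $i=1$ the inequality is best possible (equality is attained).
   Context: A convex body is a compact convex subset of $\mathbb{R}^n$. $\mathcal{L}^n_i$ is the set of $i$-dimensional linear subspaces, $K|L$ the orthogonal projection onto $L$, $L^\perp$ the orthogonal complement; for a set $C$ contained in an affine subspace $A$, $\mathrm{r}(C;A)$ denotes the Euclidean inradius of $C$ measured within $A$. Define $\mathrm{r}_i(K)=\max_{L\in\mathcal{L}^n_i}\max_{x\in L^\perp}\mathrm{r}(K\cap(x+L);x+L)$ and $\widetilde{\mathrm{r}}_i(K)=\max_{L\in\mathcal{L}^n_i}\mathrm{r}(K|L;L)$. *)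

theory Defs
  imports "HOL-Analysis.Analysis"
begin

definition convex_body :: "'a::euclidean_space set \<Rightarrow> bool" where
  "convex_body K \<longleftrightarrow> compact K \<and> convex K \<and> K \<noteq> {}"

definition inradius_in :: "'a::euclidean_space set \<Rightarrow> 'a set \<Rightarrow> real" where
  "inradius_in C A = Sup {r. r \<ge> 0 \<and> (\<exists>x\<in>A. cball x r \<inter> A \<subseteq> C)}"

definition orth_proj_set :: "'a::euclidean_space set \<Rightarrow> 'a set \<Rightarrow> 'a set" where
  "orth_proj_set K L = {y \<in> L. \<exists>k\<in>K. k - y \<in> orthogonal_comp L}"

text \<open>r_i(K): maximal inradius of i-dimensional sections (nonempty ones).\<close>
definition sect_inradius :: "nat \<Rightarrow> 'a::euclidean_space set \<Rightarrow> real" where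
  "sect_inradius i K = Sup {inradius_in (K \<inter> ((+) x ` L)) ((+) x ` L) | L x.
      subspace L \<and> dim L = i \<and> x \<in> orthogonal_comp L \<and> K \<inter> ((+) x ` L) \<noteq> {}}"

text \<open>tilde r_i(K): maximal inradius of i-dimensional projections.\<close>
definition proj_inradius :: "nat \<Rightarrow> 'a::euclidean_space set \<Rightarrow> real" where
  "proj_inradius i K = Sup {inradius_in (orth_proj_set K L) L | L.
      subspace L \<and> dim L = i}"

end

theory Submission
  imports Defs
begin

lemma core:
  fixes K L :: "'a::euclidean_space set" and u :: "'b \<Rightarrow> 'a"
  assumes conv: "convex K" and L: "subspace L" and fin: "finite I" and Ine: "I \<noteq> {}"
    and uL: "\<And>k. k \<in> I \<Longrightarrow> u k \<in> L" and usum: "(\<Sum>k\<in>I. u k) = 0"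
    and frame: "\<And>w. w \<in> L \<Longrightarrow> (\<Sum>k\<in>I. (w \<bullet> u k) *\<^sub>R u k) = w"
    and unorm: "\<And>k. k \<in> I \<Longrightarrow> norm (u k) \<le> R" and R: "R > 0" and r: "r > 0"
    and c: "c \<in> L" and ball: "cball c r \<inter> L \<subseteq> orth_proj_set K L"
  shows "\<exists>L' x q. subspace L' \<and> dim L' = dim L \<and> x \<in> orthogonal_comp L' \<and>
            q \<in> (+) x ` L' \<and> cball q (r / (real (card I) * R^2)) \<inter> ((+) x ` L') \<subseteq> K"
proof -
  define t where "t = r / R"
  have t: "t > 0" using r R by (simp add: t_def)
  have "\<forall>k\<in>I. \<exists>p\<in>K. p - (c + t *\<^sub>R u k) \<in> orthogonal_comp L"
  proof
    fix k assume k: "k \<in> I"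
    have "norm (t *\<^sub>R u k) \<le> r"
      using unorm[OF k] t R by (simp add: t_def field_simps)
    then have "c + t *\<^sub>R u k \<in> cball c r \<inter> L"
      using c uL[OF k] L by (simp add: dist_norm subspace_add subspace_scale)
    then show "\<exists>p\<in>K. p - (c + t *\<^sub>R u k) \<in> orthogonal_comp L"
      using ball by (auto simp: orth_proj_set_def)
  qed
  then obtain p where pK: "\<And>k. k \<in> I \<Longrightarrow> p k \<in> K"
      and pO: "\<And>k. k \<in> I \<Longrightarrow> p k - (c + t *\<^sub>R u k) \<in> orthogonal_comp L"
    by metis
  define N where "N = real (card I)"
  have N: "N > 0" using fin Ine by (simp add: N_def card_gt_0_iff)
  define G where "G = (\<lambda>w. \<Sum>k\<in>I. ((w \<bullet> u k) / t) *\<^sub>R p k)"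
  have linG: "linear G"
    unfolding G_def
    by (intro linear_compose_sum ballI linearI) (simp_all add: inner_add_left add_divide_distrib scaleR_add_left)
  define gc where "gc = (\<Sum>k\<in>I. (1 / N) *\<^sub>R p k)"
  have Gdiff: "G w - w \<in> orthogonal_comp L" if w: "w \<in> L" for w
  proof -
    have "(\<Sum>k\<in>I. ((w \<bullet> u k) / t) *\<^sub>R (c + t *\<^sub>R u k))
        = ((\<Sum>k\<in>I. w \<bullet> u k) / t) *\<^sub>R c + (\<Sum>k\<in>I. (w \<bullet> u k) *\<^sub>R u k)"
      using t by (simp add: scaleR_add_right sum.distrib scaleR_sum_left sum_divide_distrib)
    also have "\<dots> = w"
      using frame[OF w] usum by (simp add: inner_sum_right[symmetric])
    finally have eq: "(\<Sum>k\<in>I. ((w \<bullet> u k) / t) *\<^sub>R (c + t *\<^sub>R u k)) = w" .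
    have "G w - w = G w - (\<Sum>k\<in>I. ((w \<bullet> u k) / t) *\<^sub>R (c + t *\<^sub>R u k))"
      by (simp only: eq)
    also have "\<dots> = (\<Sum>k\<in>I. ((w \<bullet> u k) / t) *\<^sub>R (p k - (c + t *\<^sub>R u k)))"
      unfolding G_def by (simp only: scaleR_diff_right sum_subtractf)
    also have "\<dots> \<in> orthogonal_comp L"
      by (intro subspace_sum[OF subspace_orthogonal_comp] subspace_scale[OF subspace_orthogonal_comp] pO)
    finally show ?thesis .
  qed
  have Gnorm: "norm w \<le> norm (G w)" if w: "w \<in> L" for w
  proof -
    have "orthogonal w (G w - w)"
      using Gdiff[OF w] w by (auto simp: orthogonal_comp_def)
    then have "(norm (w + (G w - w)))\<^sup>2 = (norm w)\<^sup>2 + (norm (G w - w))\<^sup>2"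
      by (rule norm_add_Pythagorean)
    then have "(norm w)\<^sup>2 \<le> (norm (G w))\<^sup>2" by simp
    then show ?thesis by (metis power2_le_imp_le norm_ge_zero)
  qed
  have injG: "inj_on G (span L)"
  proof (rule inj_onI)
    fix x y assume xy: "x \<in> span L" "y \<in> span L" "G x = G y"
    then have "x - y \<in> L" using L by (metis span_eq_iff subspace_diff)
    moreover have "G (x - y) = 0" using xy linG by (simp add: linear_diff)
    ultimately have "norm (x - y) \<le> 0" using Gnorm by fastforce
    then show "x = y" by simp
  qed
  define L' where "L' = G ` L"
  have subL': "subspace L'" unfolding L'_def using linG L by (rule linear_subspace_image)
  have dimL': "dim L' = dim L" unfolding L'_def using linG injG by (rule dim_image_eq)
  obtain y z where y: "y \<in> span L'" and z: "\<And>w. w \<in> span L' \<Longrightarrow> orthogonal z w" and gcyz: "gc = y + z"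
    using orthogonal_subspace_decomp_exists[of L' gc] by metis
  have spanL': "span L' = L'" using subL' by simp
  have yL': "y \<in> L'" using y spanL' by simp
  have zO: "z \<in> orthogonal_comp L'"
    using z spanL' by (auto simp: orthogonal_comp_def orthogonal_commute)
  have gcA: "gc \<in> (+) z ` L'" using gcyz yL' by (auto simp: add.commute)
  have "cball gc (r / (N * R^2)) \<inter> ((+) z ` L') \<subseteq> K"
  proof
    fix q assume q: "q \<in> cball gc (r / (N * R^2)) \<inter> ((+) z ` L')"
    then obtain w' where w': "w' \<in> L" "q = z + G w'" by (auto simp: L'_def)
    obtain wy where wy: "wy \<in> L" "y = G wy" using yL' by (auto simp: L'_def)
    define w where "w = w' - wy"
    have wL: "w \<in> L" using w' wy L by (simp add: w_def subspace_diff)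
    have qgc: "q - gc = G w"
      using w' wy gcyz linG by (simp add: w_def linear_diff)
    have nw: "norm w \<le> r / (N * R^2)"
      using Gnorm[OF wL] q qgc norm_minus_commute[of gc q] by (simp add: dist_norm)
    have "q = gc + G w" using qgc by (simp add: algebra_simps)
    also have "\<dots> = (\<Sum>k\<in>I. (1 / N + (w \<bullet> u k) / t) *\<^sub>R p k)"
      by (simp add: gc_def G_def scaleR_add_left sum.distrib)
    also have "\<dots> \<in> K"
    proof (rule convex_sum[OF fin conv])
      show "(\<Sum>k\<in>I. 1 / N + (w \<bullet> u k) / t) = 1"
        using N usum by (simp add: sum.distrib N_def sum_divide_distrib[symmetric] inner_sum_right[symmetric])
      show "0 \<le> 1 / N + (w \<bullet> u k) / t" if k: "k \<in> I" for k
      proof -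
        have "\<bar>w \<bullet> u k\<bar> \<le> norm w * norm (u k)" by (rule Cauchy_Schwarz_ineq2)
        also have "\<dots> \<le> r / (N * R^2) * R"
          using nw unorm[OF k] r N R by (intro mult_mono) auto
        also have "\<dots> = t / N" using R N by (simp add: t_def power2_eq_square field_simps)
        finally have "- (t / N) \<le> w \<bullet> u k" by linarith
        then have "- (t / N) / t \<le> (w \<bullet> u k) / t" using t by (intro divide_right_mono) auto
        moreover have "- (t / N) / t = - (1 / N)" using t by simp
        ultimately show ?thesis by linarith
      qed
      show "p k \<in> K" if "k \<in> I" for k using pK that .
    qed
    finally show "q \<in> K" .
  qed
  then show ?thesis
    using subL' dimL' zO gcA unfolding N_def by blast
qed

lemma ortho_expand:
  fixes B :: "'a::euclidean_space set"
  assumes fin: "finite B" and orth: "pairwise orthogonal B" and n1: "\<And>b. b \<in> B \<Longrightarrow> norm b = 1"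
    and w: "w \<in> span B"
  shows "(\<Sum>b\<in>B. (w \<bullet> b) *\<^sub>R b) = w"
proof -
  obtain a where wa: "w = (\<Sum>v\<in>B. a v *\<^sub>R v)"
    using span_finite[OF fin] w by blast
  have "w \<bullet> b = a b" if b: "b \<in> B" for b
  proof -
    have "w \<bullet> b = (\<Sum>v\<in>B. a v * (v \<bullet> b))" by (simp add: wa inner_sum_left)
    also have "\<dots> = a b * (b \<bullet> b) + (\<Sum>v\<in>B - {b}. a v * (v \<bullet> b))"
      using fin b by (simp add: sum.remove)
    also have "(\<Sum>v\<in>B - {b}. a v * (v \<bullet> b)) = 0"
      using orth b by (intro sum.neutral) (auto simp: pairwise_def orthogonal_def)
    also have "b \<bullet> b = 1" using n1[OF b] by (simp add: norm_eq_1)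
    finally show ?thesis by simp
  qed
  then show ?thesis by (simp add: wa)
qed

lemma inner_basis_sum:
  fixes B :: "'a::euclidean_space set"
  assumes fin: "finite B" and orth: "pairwise orthogonal B" and n1: "\<And>b. b \<in> B \<Longrightarrow> norm b = 1"
    and b: "b \<in> B"
  shows "b \<bullet> (\<Sum>B) = 1"
proof -
  have "b \<bullet> (\<Sum>B) = (\<Sum>v\<in>B. b \<bullet> v)" by (simp add: inner_sum_right)
  also have "\<dots> = b \<bullet> b + (\<Sum>v\<in>B - {b}. b \<bullet> v)"
    using fin b by (simp add: sum.remove)
  also have "(\<Sum>v\<in>B - {b}. b \<bullet> v) = 0"
    using orth b by (intro sum.neutral) (auto simp: pairwise_def orthogonal_def)
  also have "b \<bullet> b = 1" using n1[OF b] by (simp add: norm_eq_1)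
  finally show ?thesis by simp
qed

lemma simplex_frame:
  fixes L :: "'a::euclidean_space set"
  assumes L: "subspace L" and n: "dim L = n" and n1: "n \<ge> 1"
  shows "\<exists>(I::'a option set) u. finite I \<and> card I = n + 1 \<and> (\<forall>k\<in>I. u k \<in> L) \<and> sum u I = 0 \<and>
          (\<forall>w\<in>L. (\<Sum>k\<in>I. (w \<bullet> u k) *\<^sub>R u k) = w) \<and> (\<forall>k\<in>I. (norm (u k))\<^sup>2 = n / (n + 1))"
proof -
  obtain B where BL: "B \<subseteq> L" and orth: "pairwise orthogonal B"
    and B1: "\<And>x. x \<in> B \<Longrightarrow> norm x = 1" and indB: "independent B" and cB: "card B = dim L"
    and spB: "span B = L"
    using orthonormal_basis_subspace[OF L] by metis
  have fin: "finite B" using indB by (rule independent_imp_finite)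
  define S where "S = \<Sum>B"
  define s where "s = 1 / sqrt (n + 1)"
  define \<mu> where "\<mu> = (1 - s) / n"
  have nr: "real n > 0" using n1 by simp
  have nn: "real n + real n * real n \<noteq> 0" using nr by (smt (verit) mult_pos_pos)
  have s2: "s^2 = 1 / (n + 1)" by (simp add: s_def power_divide)
  have nmu: "n * \<mu> = 1 - s" using nr by (simp add: \<mu>_def)
  have key: "s^2 - 2 * \<mu> + n * \<mu>^2 = 0"
  proof -
    have "s^2 - 2 * \<mu> + n * \<mu>^2 = s^2 - (1 - s) * (1 + s) / n"
      using nr by (simp add: \<mu>_def power2_eq_square field_simps)
    also have "\<dots> = s^2 - (1 - s^2) / n" by (simp add: power2_eq_square algebra_simps)
    also have "\<dots> = 0" using nr nn by (simp add: s2 field_simps)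
    finally show ?thesis .
  qed
  have SL: "S \<in> L" unfolding S_def using BL L by (intro subspace_sum) auto
  have bS: "b \<bullet> S = 1" if "b \<in> B" for b
    unfolding S_def using fin orth B1 that by (rule inner_basis_sum)
  have SS: "S \<bullet> S = n"
  proof -
    have "S \<bullet> S = (\<Sum>b\<in>B. b \<bullet> S)" by (simp add: S_def inner_sum_left)
    also have "\<dots> = (\<Sum>b\<in>B. 1)" using bS by simp
    finally show ?thesis using cB n by simp
  qed
  define I where "I = insert None (Some ` B)"
  define u where "u = case_option ((- s) *\<^sub>R S) (\<lambda>b. b - \<mu> *\<^sub>R S)"
  have finI: "finite I" using fin by (simp add: I_def)
  have cI: "card I = n + 1" using fin cB n by (simp add: I_def card_image)
  have sumI: "\<And>f. sum f I = f None + (\<Sum>b\<in>B. f (Some b))"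
    using fin by (simp add: I_def sum.reindex)
  have uL: "\<forall>k\<in>I. u k \<in> L"
    using SL BL L by (auto simp: I_def u_def subspace_scale subspace_diff subspace_neg)
  have usum: "sum u I = 0"
  proof -
    have "sum u I = (- s) *\<^sub>R S + (S - (real n * \<mu>) *\<^sub>R S)"
      using cB n by (simp add: sumI u_def sum_subtractf S_def sum_constant_scaleR)
    also have "\<dots> = (1 - s - real n * \<mu>) *\<^sub>R S" by (simp add: algebra_simps)
    also have "\<dots> = 0" using nmu by simp
    finally show ?thesis .
  qed
  have frame: "\<forall>w\<in>L. (\<Sum>k\<in>I. (w \<bullet> u k) *\<^sub>R u k) = w"
  proof
    fix w assume w: "w \<in> L"
    define T where "T = w \<bullet> S"
    have T: "T = (\<Sum>b\<in>B. w \<bullet> b)" by (simp add: T_def S_def inner_sum_right)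
    have exp: "(\<Sum>b\<in>B. (w \<bullet> b) *\<^sub>R b) = w"
      using fin orth B1 w spB by (intro ortho_expand) auto
    have trm: "(w \<bullet> (b - \<mu> *\<^sub>R S)) *\<^sub>R (b - \<mu> *\<^sub>R S)
        = (w \<bullet> b) *\<^sub>R b + ((\<mu>^2 * T - \<mu> * (w \<bullet> b)) *\<^sub>R S - (\<mu> * T) *\<^sub>R b)" for b
      by (simp add: T_def inner_diff_right algebra_simps power2_eq_square)
    have "(\<Sum>b\<in>B. (w \<bullet> (b - \<mu> *\<^sub>R S)) *\<^sub>R (b - \<mu> *\<^sub>R S))
        = w + ((\<Sum>b\<in>B. \<mu>^2 * T - \<mu> * (w \<bullet> b)) *\<^sub>R S - (\<mu> * T) *\<^sub>R S)"
      by (simp only: trm sum.distrib sum_subtractf exp scaleR_sum_left[symmetric]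
          scaleR_sum_right[symmetric] S_def[symmetric])
    also have "(\<Sum>b\<in>B. \<mu>^2 * T - \<mu> * (w \<bullet> b)) = n * \<mu>^2 * T - \<mu> * T"
      using cB n by (simp add: sum_subtractf sum_distrib_left[symmetric] T[symmetric])
    finally have A: "(\<Sum>b\<in>B. (w \<bullet> (b - \<mu> *\<^sub>R S)) *\<^sub>R (b - \<mu> *\<^sub>R S))
        = w + ((n * \<mu>^2 * T - \<mu> * T) *\<^sub>R S - (\<mu> * T) *\<^sub>R S)" .
    have "(\<Sum>k\<in>I. (w \<bullet> u k) *\<^sub>R u k) = (s^2 * T) *\<^sub>R S + (\<Sum>b\<in>B. (w \<bullet> (b - \<mu> *\<^sub>R S)) *\<^sub>R (b - \<mu> *\<^sub>R S))"
      by (simp add: sumI u_def T_def power2_eq_square)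
    also have "\<dots> = w + (T * (s^2 - 2 * \<mu> + n * \<mu>^2)) *\<^sub>R S"
      unfolding A by (simp add: algebra_simps) (metis mult_2_right scaleR_add_left distrib_left)
    also have "\<dots> = w" by (simp add: key)
    finally show "(\<Sum>k\<in>I. (w \<bullet> u k) *\<^sub>R u k) = w" .
  qed
  have norms: "\<forall>k\<in>I. (norm (u k))\<^sup>2 = real n / (real n + 1)"
  proof
    fix k assume k: "k \<in> I"
    show "(norm (u k))\<^sup>2 = real n / (real n + 1)"
    proof (cases k)
      case None
      have "(norm (u k))\<^sup>2 = ((- s) *\<^sub>R S) \<bullet> ((- s) *\<^sub>R S)"
        using None by (simp only: power2_norm_eq_inner u_def option.case)
      also have "\<dots> = s^2 * n" by (simp add: SS power2_eq_square)
      finally show ?thesis by (simp add: s2)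
    next
      case (Some b)
      then have b: "b \<in> B" using k by (auto simp: I_def)
      have "(norm (u k))\<^sup>2 = b \<bullet> b - 2 * \<mu> * (b \<bullet> S) + \<mu>^2 * (S \<bullet> S)"
        using Some unfolding power2_norm_eq_inner u_def option.case
        by (simp add: inner_diff_left inner_diff_right inner_commute power2_eq_square algebra_simps)
      also have "\<dots> = 1 - 2 * \<mu> + n * \<mu>^2"
        using B1[OF b] bS[OF b] SS by (simp add: norm_eq_1)
      also have "\<dots> = 1 - s^2" using key by linarith
      also have "\<dots> = real n / (real n + 1)" using nr by (simp add: s2 field_simps)
      finally show ?thesis .
    qed
  qed
  show ?thesis
    by (rule exI[of _ I], rule exI[of _ u]) (intro conjI finI cI uL usum frame norms)
qed

lemma inr_props:
  fixes C :: "'a::euclidean_space set"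
  assumes CM: "C \<subseteq> cball 0 M" and L: "subspace L" and L0: "L \<noteq> {0}"
    and x0: "x0 \<in> C" "x0 \<in> (+) a ` L"
  shows "0 \<le> inradius_in C ((+) a ` L)" and "inradius_in C ((+) a ` L) \<le> 2 * M"
    and "\<And>r x. r \<ge> 0 \<Longrightarrow> x \<in> (+) a ` L \<Longrightarrow> cball x r \<inter> ((+) a ` L) \<subseteq> C \<Longrightarrow> r \<le> inradius_in C ((+) a ` L)"
proof -
  define A where "A = (+) a ` L"
  define RS where "RS = {r. r \<ge> 0 \<and> (\<exists>x\<in>A. cball x r \<inter> A \<subseteq> C)}"
  have inr: "inradius_in C A = Sup RS" by (simp add: inradius_in_def RS_def)
  obtain v where v: "v \<in> L" "v \<noteq> 0" using L0 L subspace_0 by blast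
  define e where "e = v /\<^sub>R norm v"
  have eL: "e \<in> L" using v L by (simp add: e_def subspace_scale)
  have ne: "norm e = 1" using v by (simp add: e_def)
  have bnd: "r \<le> 2 * M" if "r \<in> RS" for r
  proof -
    from that obtain x where r0: "r \<ge> 0" and x: "x \<in> A" and sub: "cball x r \<inter> A \<subseteq> C"
      by (auto simp: RS_def)
    obtain l where l: "l \<in> L" "x = a + l" using x by (auto simp: A_def)
    have "x + r *\<^sub>R e \<in> A" using l eL L unfolding A_def
      by (intro image_eqI[of _ _ "l + r *\<^sub>R e"]) (auto simp: subspace_add subspace_scale algebra_simps)
    moreover have "dist x (x + r *\<^sub>R e) \<le> r" using ne r0 by (simp add: dist_norm)
    ultimately have "x + r *\<^sub>R e \<in> C" using sub by auto
    moreover have "x \<in> C" using sub x r0 by auto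
    ultimately have "norm (x + r *\<^sub>R e) \<le> M" "norm x \<le> M" using CM by auto
    moreover have "norm (r *\<^sub>R e) \<le> norm (x + r *\<^sub>R e) + norm x"
      using norm_triangle_ineq4[of "x + r *\<^sub>R e" x] by simp
    ultimately show ?thesis using ne r0 by simp
  qed
  have bdd: "bdd_above RS" by (rule bdd_aboveI[of _ "2 * M"]) (rule bnd)
  have "0 \<in> RS" using x0 by (auto simp: RS_def A_def)
  then have ne: "RS \<noteq> {}" by auto
  show "0 \<le> inradius_in C ((+) a ` L)"
    using cSup_upper[OF \<open>0 \<in> RS\<close> bdd] inr by (simp add: A_def)
  show "inradius_in C ((+) a ` L) \<le> 2 * M"
    using cSup_least[OF ne bnd] inr by (simp add: A_def)
  show "r \<le> inradius_in C ((+) a ` L)" if "r \<ge> 0" "x \<in> (+) a ` L" "cball x r \<inter> ((+) a ` L) \<subseteq> C" for r x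
  proof -
    have "r \<in> RS" using that by (auto simp: RS_def A_def)
    then show ?thesis using cSup_upper[OF _ bdd] inr by (simp add: A_def)
  qed
qed

lemma proj_bounded:
  fixes K :: "'a::euclidean_space set"
  assumes "K \<subseteq> cball 0 M"
  shows "orth_proj_set K L \<subseteq> cball 0 M"
proof
  fix y assume "y \<in> orth_proj_set K L"
  then obtain k where y: "y \<in> L" "k \<in> K" "k - y \<in> orthogonal_comp L"
    by (auto simp: orth_proj_set_def)
  have "orthogonal y (k - y)" using y by (auto simp: orthogonal_comp_def)
  then have "(norm (y + (k - y)))\<^sup>2 = (norm y)\<^sup>2 + (norm (k - y))\<^sup>2" by (rule norm_add_Pythagorean)
  then have "(norm y)\<^sup>2 \<le> (norm k)\<^sup>2" by simp
  then have "norm y \<le> norm k" by (metis power2_le_imp_le norm_ge_zero)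
  then show "y \<in> cball 0 M" using y assms by auto
qed

lemma exists_subspace_dim:
  assumes "i \<le> DIM('a::euclidean_space)"
  shows "\<exists>L::'a set. subspace L \<and> dim L = i"
proof -
  obtain B where B: "B \<subseteq> (Basis::'a set)" "card B = i"
    using obtain_subset_with_card_n[OF assms] by metis
  have "independent B" using B(1) independent_Basis by (rule independent_mono[rotated])
  then have "dim (span B) = i" using B dim_span_eq_card_independent[of B] by simp
  then show ?thesis using subspace_span by blast
qed

lemma proj_point:
  fixes K :: "'a::euclidean_space set"
  assumes k: "k \<in> K" and L: "subspace L"
  obtains y z where "y \<in> L" "z \<in> orthogonal_comp L" "k = y + z" "y \<in> orth_proj_set K L"
proof -
  obtain y z where y: "y \<in> span L" and z: "\<And>w. w \<in> span L \<Longrightarrow> orthogonal z w" and kyz: "k = y + z"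
    using orthogonal_subspace_decomp_exists[of L k] by metis
  have sp: "span L = L" using L by simp
  have zO: "z \<in> orthogonal_comp L" using z sp by (auto simp: orthogonal_comp_def orthogonal_commute)
  have yL: "y \<in> L" using y sp by simp
  have "k - y \<in> orthogonal_comp L" using zO kyz by simp
  then have "y \<in> orth_proj_set K L" using yL k unfolding orth_proj_set_def by blast
  then show ?thesis using that yL zO kyz by blast
qed


lemma dim_nz: "dim (L::'a::euclidean_space set) \<ge> 1 \<Longrightarrow> L \<noteq> {0}"
  by auto

lemma sect_upper:
  fixes K :: "'a::euclidean_space set"
  assumes M: "K \<subseteq> cball 0 M" and i: "1 \<le> i" and L: "subspace L" "dim L = i"
    and x: "x \<in> orthogonal_comp L" and ne: "K \<inter> ((+) x ` L) \<noteq> {}"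
  shows "inradius_in (K \<inter> ((+) x ` L)) ((+) x ` L) \<le> sect_inradius i K"
  unfolding sect_inradius_def
proof (rule cSup_upper)
  show "inradius_in (K \<inter> (+) x ` L) ((+) x ` L) \<in> {inradius_in (K \<inter> (+) x ` L) ((+) x ` L) |L x.
        subspace L \<and> dim L = i \<and> x \<in> orthogonal_comp L \<and> K \<inter> (+) x ` L \<noteq> {}}"
    using L x ne by blast
  show "bdd_above {inradius_in (K \<inter> (+) x ` L) ((+) x ` L) |L x.
        subspace L \<and> dim L = i \<and> x \<in> orthogonal_comp L \<and> K \<inter> (+) x ` L \<noteq> {}}"
  proof (rule bdd_aboveI[of _ "2 * M"])
    fix e assume "e \<in> {inradius_in (K \<inter> (+) x ` L) ((+) x ` L) |L x.
        subspace L \<and> dim L = i \<and> x \<in> orthogonal_comp L \<and> K \<inter> (+) x ` L \<noteq> {}}"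
    then obtain L' x' where e: "e = inradius_in (K \<inter> (+) x' ` L') ((+) x' ` L')" "subspace L'" "dim L' = i"
      "K \<inter> (+) x' ` L' \<noteq> {}" by blast
    then obtain x0 where x0: "x0 \<in> K \<inter> (+) x' ` L'" by blast
    have "K \<inter> (+) x' ` L' \<subseteq> cball 0 M" using M by auto
    from inr_props(2)[OF this e(2) dim_nz[of L'] x0] e i x0 show "e \<le> 2 * M" by auto
  qed
qed

lemma proj_upper:
  fixes K :: "'a::euclidean_space set"
  assumes M: "K \<subseteq> cball 0 M" and i: "1 \<le> i" and L: "subspace L" "dim L = i" and k: "k \<in> K"
  shows "inradius_in (orth_proj_set K L) L \<le> proj_inradius i K"
  unfolding proj_inradius_def
proof (rule cSup_upper)
  show "inradius_in (orth_proj_set K L) L \<in> {inradius_in (orth_proj_set K L) L | L. subspace L \<and> dim L = i}"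
    using L by blast
  show "bdd_above {inradius_in (orth_proj_set K L) L | L. subspace L \<and> dim L = i}"
  proof (rule bdd_aboveI[of _ "2 * M"])
    fix e assume "e \<in> {inradius_in (orth_proj_set K L) L | L. subspace L \<and> dim L = i}"
    then obtain L' where e: "e = inradius_in (orth_proj_set K L') L'" "subspace L'" "dim L' = i" by blast
    obtain y z where y: "y \<in> L'" "y \<in> orth_proj_set K L'" using proj_point[OF k e(2)] by metis
    have y0: "y \<in> (+) 0 ` L'" using y by simp
    from inr_props(2)[OF proj_bounded[OF M] e(2) dim_nz[of L'] y(2) y0] e i
    show "e \<le> 2 * M" by auto
  qed
qed


lemma bounded_ball0:
  fixes K :: "'a::euclidean_space set"
  assumes "convex_body K" obtains M where "K \<subseteq> cball 0 M"
proof -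
  have "bounded K" using assms by (simp add: convex_body_def compact_imp_bounded)
  then obtain b where "\<forall>x\<in>K. norm x \<le> b" using bounded_pos by metis
  then show ?thesis by (intro that[of b]) (auto simp: subset_iff)
qed

lemma sect_nonneg:
  fixes K :: "'a::euclidean_space set"
  assumes K: "convex_body K" and i: "1 \<le> i" "i \<le> DIM('a)"
  shows "0 \<le> sect_inradius i K"
proof -
  obtain M where M: "K \<subseteq> cball 0 M" using bounded_ball0[OF K] by metis
  obtain k where k: "k \<in> K" using K by (auto simp: convex_body_def)
  obtain L :: "'a set" where L: "subspace L" "dim L = i" using exists_subspace_dim[OF i(2)] by blast
  obtain y z where yz: "y \<in> L" "z \<in> orthogonal_comp L" "k = y + z" using proj_point[OF k L(1)] by metis
  have kA: "k \<in> K \<inter> (+) z ` L" using yz k by (auto simp: add.commute)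
  have CM: "K \<inter> (+) z ` L \<subseteq> cball 0 M" using M by auto
  have kA2: "k \<in> (+) z ` L" using kA by blast
  from inr_props(1)[OF CM L(1) dim_nz[of L] kA kA2] i L
  have "0 \<le> inradius_in (K \<inter> (+) z ` L) ((+) z ` L)" by auto
  also have "\<dots> \<le> sect_inradius i K" using sect_upper[OF M i(1) L yz(2)] kA by blast
  finally show ?thesis .
qed

lemma main_ineq:
  fixes K :: "'a::euclidean_space set"
  assumes K: "convex_body K" and i: "1 \<le> i" "i \<le> DIM('a)"
  shows "proj_inradius i K \<le> real i * sect_inradius i K"
proof -
  obtain M where M: "K \<subseteq> cball 0 M" using bounded_ball0[OF K] by metis
  obtain k where k: "k \<in> K" using K by (auto simp: convex_body_def)
  have convK: "convex K" using K by (simp add: convex_body_def)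
  have sn: "0 \<le> sect_inradius i K" by (rule sect_nonneg[OF K i])
  have each: "inradius_in (orth_proj_set K L) L \<le> real i * sect_inradius i K"
    if L: "subspace L" "dim L = i" for L
  proof -
    define RS where "RS = {r. r \<ge> 0 \<and> (\<exists>x\<in>L. cball x r \<inter> L \<subseteq> orth_proj_set K L)}"
    have inr: "inradius_in (orth_proj_set K L) L = Sup RS" by (simp add: inradius_in_def RS_def)
    obtain y z where y: "y \<in> L" "y \<in> orth_proj_set K L" using proj_point[OF k L(1)] by metis
    have "0 \<in> RS" using y by (auto simp: RS_def)
    then have ne: "RS \<noteq> {}" by auto
    have "r \<le> real i * sect_inradius i K" if r: "r \<in> RS" for r
    proof (cases "r = 0")
      case True then show ?thesis using sn by simp
    next
      case False
      from r obtain c where r0: "r \<ge> 0" and c: "c \<in> L" and ball: "cball c r \<inter> L \<subseteq> orth_proj_set K L"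
        by (auto simp: RS_def)
      have rpos: "r > 0" using r0 False by simp
      obtain I :: "'a option set" and u where fin: "finite I" and cI: "card I = i + 1"
        and uL: "\<forall>k\<in>I. u k \<in> L" and usum: "sum u I = 0"
        and frame: "\<forall>w\<in>L. (\<Sum>k\<in>I. (w \<bullet> u k) *\<^sub>R u k) = w"
        and norms: "\<forall>k\<in>I. (norm (u k))\<^sup>2 = real i / (real i + 1)"
        using simplex_frame[OF L i(1)] by metis
      define R where "R = sqrt (real i / (real i + 1))"
      have Rpos: "R > 0" using i by (simp add: R_def)
      have R2: "R^2 = real i / (real i + 1)" by (simp add: R_def)
      have unorm: "norm (u k) \<le> R" if "k \<in> I" for k
        using norms that by (auto simp: R_def intro!: real_le_rsqrt)
      have Ine: "I \<noteq> {}" using cI by auto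
      obtain L' x q where L': "subspace L'" "dim L' = dim L" and x: "x \<in> orthogonal_comp L'"
        and q: "q \<in> (+) x ` L'" and sub: "cball q (r / (real (card I) * R^2)) \<inter> ((+) x ` L') \<subseteq> K"
        using core[OF convK L(1) fin Ine _ usum _ unorm Rpos rpos c ball] uL frame by metis
      have rho: "r / (real (card I) * R^2) = r / i"
        using cI R2 i by (simp add: field_simps)
      have qK: "q \<in> K \<inter> (+) x ` L'" using sub q rpos i by (auto simp: rho)
      have CM: "K \<inter> (+) x ` L' \<subseteq> cball 0 M" using M by auto
      have qA: "q \<in> (+) x ` L'" using q .
      have r0': "0 \<le> r / i" using rpos by simp
      from inr_props(3)[OF CM L'(1) dim_nz[of L'] qK qA r0' qA] sub rpos L' L i
      have "r / i \<le> inradius_in (K \<inter> (+) x ` L') ((+) x ` L')" by (auto simp: rho)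
      also have "\<dots> \<le> sect_inradius i K"
        using sect_upper[OF M i(1) L'(1) _ x] L' L qK by blast
      finally show ?thesis using i by (simp add: field_simps)
    qed
    then show ?thesis using cSup_least[OF ne] inr by simp
  qed
  obtain L0 :: "'a set" where "subspace L0" "dim L0 = i" using exists_subspace_dim[OF i(2)] by blast
  then have "{inradius_in (orth_proj_set K L) L | L. subspace L \<and> dim L = i} \<noteq> {}" by blast
  then show ?thesis unfolding proj_inradius_def
    by (rule cSup_least) (use each in blast)
qed

lemma sect_le_proj:
  fixes K :: "'a::euclidean_space set"
  assumes K: "convex_body K" and i: "1 \<le> i" "i \<le> DIM('a)"
  shows "sect_inradius i K \<le> proj_inradius i K"
proof -
  obtain M where M: "K \<subseteq> cball 0 M" using bounded_ball0[OF K] by metis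
  obtain k where k: "k \<in> K" using K by (auto simp: convex_body_def)
  have each: "inradius_in (K \<inter> (+) x ` L) ((+) x ` L) \<le> proj_inradius i K"
    if L: "subspace L" "dim L = i" and x: "x \<in> orthogonal_comp L" and ne: "K \<inter> (+) x ` L \<noteq> {}" for L x
  proof -
    define A where "A = (+) x ` L"
    define RS where "RS = {r. r \<ge> 0 \<and> (\<exists>q\<in>A. cball q r \<inter> A \<subseteq> K \<inter> A)}"
    have inr: "inradius_in (K \<inter> A) A = Sup RS" by (simp add: inradius_in_def RS_def)
    obtain x0 where x0: "x0 \<in> K \<inter> A" using ne by (auto simp: A_def)
    have "0 \<in> RS" using x0 by (auto simp: RS_def)
    then have rne: "RS \<noteq> {}" by auto
    have "r \<le> inradius_in (orth_proj_set K L) L" if r: "r \<in> RS" for r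
    proof -
      from r obtain q where r0: "r \<ge> 0" and q: "q \<in> A" and sub: "cball q r \<inter> A \<subseteq> K \<inter> A"
        by (auto simp: RS_def)
      obtain l where l: "l \<in> L" "q = x + l" using q by (auto simp: A_def)
      have bl: "cball l r \<inter> L \<subseteq> orth_proj_set K L"
      proof
        fix y assume y: "y \<in> cball l r \<inter> L"
        have "x + y \<in> cball q r \<inter> A" using y l by (auto simp: A_def dist_norm)
        then have "x + y \<in> K" using sub by auto
        moreover have "(x + y) - y \<in> orthogonal_comp L" using x by simp
        ultimately show "y \<in> orth_proj_set K L" using y unfolding orth_proj_set_def by blast
      qed
      obtain yy zz where yy: "yy \<in> orth_proj_set K L" "yy \<in> L" using proj_point[OF k L(1)] by metis
      have l0: "l \<in> (+) 0 ` L" "yy \<in> (+) 0 ` L" using l yy by auto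
      from inr_props(3)[OF proj_bounded[OF M] L(1) dim_nz[of L] yy(1) l0(2) r0 l0(1)] bl L i
      show ?thesis by auto
    qed
    then have "inradius_in (K \<inter> A) A \<le> inradius_in (orth_proj_set K L) L"
      using cSup_least[OF rne] inr by simp
    also have "\<dots> \<le> proj_inradius i K" using proj_upper[OF M i(1) L k] .
    finally show ?thesis by (simp add: A_def)
  qed
  obtain L0 :: "'a set" where L0: "subspace L0" "dim L0 = i" using exists_subspace_dim[OF i(2)] by blast
  obtain y z where yz: "y \<in> L0" "z \<in> orthogonal_comp L0" "k = y + z" using proj_point[OF k L0(1)] by metis
  have "k \<in> K \<inter> (+) z ` L0" using yz k by (auto simp: add.commute)
  then have "{inradius_in (K \<inter> ((+) x ` L)) ((+) x ` L) | L x.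
      subspace L \<and> dim L = i \<and> x \<in> orthogonal_comp L \<and> K \<inter> ((+) x ` L) \<noteq> {}} \<noteq> {}"
    using L0 yz by blast
  then show ?thesis unfolding sect_inradius_def
    by (rule cSup_least) (use each in blast)
qed

theorem corollary4p3:
  fixes K :: "'a::euclidean_space set" and i :: nat
  assumes "convex_body K" and "1 \<le> i" and "i \<le> DIM('a)"
  shows "proj_inradius i K \<le> real i * sect_inradius i K \<and>
         (\<exists>K' :: 'a set. convex_body K' \<and> sect_inradius 1 K' > 0 \<and>
           proj_inradius 1 K' = real 1 * sect_inradius 1 K')"
proof
  show "proj_inradius i K \<le> real i * sect_inradius i K" using main_ineq assms by blast
  define K' where "K' = cball (0::'a) 1"
  have cb: "convex_body K'" by (simp add: K'_def convex_body_def)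
  have d1: "1 \<le> DIM('a)" by (simp add: DIM_positive Suc_le_eq)
  obtain L0 :: "'a set" where L0: "subspace L0" "dim L0 = 1" using exists_subspace_dim[OF d1] by blast
  have M: "K' \<subseteq> cball 0 1" by (simp add: K'_def)
  have 0: "(0::'a) \<in> orthogonal_comp L0" by (simp add: orthogonal_comp_def orthogonal_def)
  have A: "(+) 0 ` L0 = L0" by simp
  have z: "(0::'a) \<in> K' \<inter> (+) 0 ` L0" using L0 by (simp add: K'_def subspace_0)
  have CM: "K' \<inter> (+) 0 ` L0 \<subseteq> cball 0 1" using M by auto
  have z2: "(0::'a) \<in> (+) 0 ` L0" using z by blast
  have o1: "(0::real) \<le> 1" by simp
  from inr_props(3)[OF CM L0(1) dim_nz[of L0] z z2 o1 z2] L0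
  have "1 \<le> inradius_in (K' \<inter> (+) 0 ` L0) ((+) 0 ` L0)" by (auto simp: K'_def)
  also have "\<dots> \<le> sect_inradius 1 K'" using sect_upper[OF M _ L0 0] z by blast
  finally have pos: "sect_inradius 1 K' > 0" by simp
  have "proj_inradius 1 K' = real 1 * sect_inradius 1 K'"
    using main_ineq[OF cb _ d1] sect_le_proj[OF cb _ d1] by simp
  then show "\<exists>K' :: 'a set. convex_body K' \<and> sect_inradius 1 K' > 0 \<and>
           proj_inradius 1 K' = real 1 * sect_inradius 1 K'" using cb pos by blast
qed

end
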